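(* Let $K$ be a field and let $f\colon\mathbb Z^k\to K$ be a hypergeometric term on $\mathbb Z^k$ that is not a zero divisor. Then for each $\vec v\in\mathbb Z^k$ there is a unique term ratio of $f$ in the direction $\vec v$.
   Context: For $f\colon\mathbb Z^k\to K$ and $\vec v\in\mathbb Z^k$ write $f^{\vec v}(\vec z)=f(\vec z+\vec v)$. A hypergeometric term on $\mathbb Z^k$ over $K$ is a function $f\colon\mathbb Z^k\to K$ such that for each $i\in\{1,\dots,k\}$ there are nonzero polynomials $A_i,B_i\in K[\vec z]$ with $A_i(\vec z)f(\vec z)=B_i(\vec z)f(\vec z+\vec e_i)$ for all $\vec z\in\mathbb Z^k$. $f$ is a zero divisor if there is a nonzero polynomial $p$ with $p(\vec z)f(\vec z)=0$ for all $\vec z$. A term ratio of $f$ in the direction $\vec v$ is a rational function $R_{\vec v}=A_{\vec v}/B_{\vec v}\in K(\vec z)$ where $A_{\vec v},B_{\vec v}\in K[\vec z]$ are nonzero polynomials with $A_{\vec v}f=B_{\vec v}f^{\vec v}$ pointwise on $\mathbb Z^k$. *)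

theory Defs
  imports Main "HOL-Library.Poly_Mapping"
begin

text \<open>Multivariate polynomials over a field K in variables indexed by a finite type 'n
  (so k = CARD('n)); monomials are finitely supported exponent vectors.
  Points of Z^k are functions 'n \<Rightarrow> int.\<close>

type_synonym ('n, 'a) mpoly = "('n \<Rightarrow>\<^sub>0 nat) \<Rightarrow>\<^sub>0 'a"

definition monom_eval :: "('n \<Rightarrow>\<^sub>0 nat) \<Rightarrow> ('n \<Rightarrow> int) \<Rightarrow> 'a::comm_ring_1" where
  "monom_eval m z = (\<Prod>i\<in>Poly_Mapping.keys m. of_int (z i) ^ Poly_Mapping.lookup m i)"

definition mpoly_eval :: "('n, 'a::comm_ring_1) mpoly \<Rightarrow> ('n \<Rightarrow> int) \<Rightarrow> 'a" where
  "mpoly_eval p z = (\<Sum>m\<in>Poly_Mapping.keys p. Poly_Mapping.lookup p m * monom_eval m z)"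

definition unit_vec :: "'n \<Rightarrow> ('n \<Rightarrow> int)" where
  "unit_vec i = (\<lambda>j. if j = i then 1 else 0)"

definition shift :: "(('n \<Rightarrow> int) \<Rightarrow> 'a) \<Rightarrow> ('n \<Rightarrow> int) \<Rightarrow> (('n \<Rightarrow> int) \<Rightarrow> 'a)" where
  "shift f v = (\<lambda>z. f (\<lambda>j. z j + v j))"

definition hypergeometric_term :: "(('n::finite \<Rightarrow> int) \<Rightarrow> 'a::field) \<Rightarrow> bool" where
  "hypergeometric_term f \<longleftrightarrow>
     (\<forall>i. \<exists>A B :: ('n, 'a) mpoly. A \<noteq> 0 \<and> B \<noteq> 0 \<and>
        (\<forall>z. mpoly_eval A z * f z = mpoly_eval B z * shift f (unit_vec i) z))"

definition zero_divisor :: "(('n::finite \<Rightarrow> int) \<Rightarrow> 'a::field) \<Rightarrow> bool" where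
  "zero_divisor f \<longleftrightarrow> (\<exists>p :: ('n, 'a) mpoly. p \<noteq> 0 \<and> (\<forall>z. mpoly_eval p z * f z = 0))"

text \<open>(A, B) represents the term ratio A/B of f in direction v.\<close>
definition is_term_ratio ::
  "(('n::finite \<Rightarrow> int) \<Rightarrow> 'a::field) \<Rightarrow> ('n \<Rightarrow> int) \<Rightarrow> ('n, 'a) mpoly \<Rightarrow> ('n, 'a) mpoly \<Rightarrow> bool" where
  "is_term_ratio f v A B \<longleftrightarrow> A \<noteq> 0 \<and> B \<noteq> 0 \<and>
     (\<forall>z. mpoly_eval A z * f z = mpoly_eval B z * shift f v z)"

text \<open>Two representatives A/B and A'/B' are the same rational function iff A*B' = A'*B.\<close>
definition unique_term_ratio :: "(('n::finite \<Rightarrow> int) \<Rightarrow> 'a::field) \<Rightarrow> ('n \<Rightarrow> int) \<Rightarrow> bool" where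
  "unique_term_ratio f v \<longleftrightarrow>
     (\<exists>A B. is_term_ratio f v A B \<and>
        (\<forall>A' B'. is_term_ratio f v A' B' \<longrightarrow> A * B' = A' * B))"

end

theory Submission
  imports Defs
begin

lemma nzd_gen:
  fixes p q :: "'m::cancel_comm_monoid_add \<Rightarrow>\<^sub>0 'b::semiring_no_zero_divisors"
    and \<phi> :: "'m \<Rightarrow> 'l::{ordered_cancel_comm_monoid_add, linorder}"
  assumes inj: "inj \<phi>" and hom: "\<And>a b. \<phi> (a + b) = \<phi> a + \<phi> b"
    and p: "p \<noteq> 0" and q: "q \<noteq> 0"
  shows "p * q \<noteq> 0"
proof -
  have ex: "\<exists>x\<in>S. \<forall>y\<in>S. \<phi> y \<le> \<phi> x" if "finite S" "S \<noteq> {}" for S :: "'m set"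
  proof -
    have "Max (\<phi> ` S) \<in> \<phi> ` S" using that by simp
    then obtain x where "x \<in> S" "\<phi> x = Max (\<phi> ` S)" by auto
    moreover have "\<phi> y \<le> \<phi> x" if "y \<in> S" for y
      using Max_ge[of "\<phi> ` S" "\<phi> y"] \<open>finite S\<close> that \<open>\<phi> x = _\<close> by auto
    ultimately show ?thesis by blast
  qed
  have kp: "Poly_Mapping.keys p \<noteq> {}" using p by simp
  have kq: "Poly_Mapping.keys q \<noteq> {}" using q by simp
  obtain a0 where a0: "a0 \<in> Poly_Mapping.keys p" "\<forall>y\<in>Poly_Mapping.keys p. \<phi> y \<le> \<phi> a0"
    using ex[OF finite_keys kp] by blast
  obtain b0 where b0: "b0 \<in> Poly_Mapping.keys q" "\<forall>y\<in>Poly_Mapping.keys q. \<phi> y \<le> \<phi> b0"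
    using ex[OF finite_keys kq] by blast
  have inner: "Poly_Mapping.lookup p l * (\<Sum>r. Poly_Mapping.lookup q r when a0 + b0 = l + r)
      = (if l = a0 then Poly_Mapping.lookup p a0 * Poly_Mapping.lookup q b0 else 0)" for l
  proof (cases "l = a0")
    case True
    have "(\<Sum>r. Poly_Mapping.lookup q r when a0 + b0 = l + r) = (\<Sum>r. Poly_Mapping.lookup q r when r = b0)"
      by (rule Sum_any.cong) (auto simp: True when_def)
    then show ?thesis using True by simp
  next
    case False
    show ?thesis
    proof (cases "l \<in> Poly_Mapping.keys p")
      case False': False
      then show ?thesis using False by (simp add: in_keys_iff)
    next
      case True
      have "\<phi> l < \<phi> a0"
        using a0 True False inj by (metis injD order_le_less)
      have "(Poly_Mapping.lookup q r when a0 + b0 = l + r) = 0" for r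
      proof (cases "r \<in> Poly_Mapping.keys q \<and> a0 + b0 = l + r")
        case True2: True
        then have "\<phi> r \<le> \<phi> b0" using b0 by auto
        then have "\<phi> l + \<phi> r < \<phi> a0 + \<phi> b0"
          using \<open>\<phi> l < \<phi> a0\<close> add_less_le_mono by blast
        then show ?thesis using True2 hom by (metis less_irrefl)
      next
        case False
        then show ?thesis by (auto simp: when_def in_keys_iff)
      qed
      then show ?thesis using False by simp
    qed
  qed
  have "Poly_Mapping.lookup (p * q) (a0 + b0) = Poly_Mapping.lookup p a0 * Poly_Mapping.lookup q b0"
    by (simp add: lookup_mult inner)
  also have "\<dots> \<noteq> 0" using a0 b0 by (simp add: in_keys_iff)
  finally show ?thesis by auto
qed

lemma mpoly_nzd:
  fixes p q :: "('n::finite, 'a::field) mpoly"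
  assumes "p \<noteq> 0" "q \<noteq> 0"
  shows "p * q \<noteq> 0"
proof -
  obtain g :: "'n \<Rightarrow> nat" where g: "inj g"
    using finite_imp_inj_to_nat_seg[of "UNIV :: 'n set"] by auto
  define \<phi> :: "('n \<Rightarrow>\<^sub>0 nat) \<Rightarrow> (nat \<Rightarrow>\<^sub>0 nat)" where
    "\<phi> m = (\<Sum>i\<in>UNIV. Poly_Mapping.single (g i) (Poly_Mapping.lookup m i))" for m
  have lk: "Poly_Mapping.lookup (\<phi> m) (g i) = Poly_Mapping.lookup m i" for m i
  proof -
    have "Poly_Mapping.lookup (\<phi> m) (g i) = (\<Sum>j\<in>UNIV. if j = i then Poly_Mapping.lookup m i else 0)"
      unfolding \<phi>_def lookup_sum
      by (rule sum.cong) (auto simp: lookup_single when_def dest: injD[OF g])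
    then show ?thesis by simp
  qed
  have "inj \<phi>"
  proof (rule injI)
    fix m m' assume "\<phi> m = \<phi> m'"
    then have "Poly_Mapping.lookup m i = Poly_Mapping.lookup m' i" for i using lk by metis
    then show "m = m'" by (simp add: poly_mapping_eqI)
  qed
  moreover have "\<phi> (a + b) = \<phi> a + \<phi> b" for a b
    unfolding \<phi>_def by (simp add: lookup_add single_add sum.distrib)
  ultimately show ?thesis using nzd_gen[of \<phi> p q] assms by blast
qed

lemma monom_eval_UNIV:
  "monom_eval m z = (\<Prod>i\<in>UNIV. of_int (z i) ^ Poly_Mapping.lookup m i)"
  for m :: "'n::finite \<Rightarrow>\<^sub>0 nat"
  unfolding monom_eval_def
  by (rule prod.mono_neutral_left) (auto simp: in_keys_iff)

lemma monom_eval_add: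
  "monom_eval (m + m') z = monom_eval m z * monom_eval m' z"
  for m :: "'n::finite \<Rightarrow>\<^sub>0 nat"
  by (simp add: monom_eval_UNIV lookup_add power_add prod.distrib)

lemma monom_eval_0: "monom_eval 0 z = 1"
  by (simp add: monom_eval_def)

lemma mpoly_eval_superset:
  fixes p :: "('n::finite, 'a::comm_ring_1) mpoly"
  assumes "finite S" "Poly_Mapping.keys p \<subseteq> S"
  shows "mpoly_eval p z = (\<Sum>m\<in>S. Poly_Mapping.lookup p m * monom_eval m z)"
  unfolding mpoly_eval_def
  by (rule sum.mono_neutral_left) (use assms in \<open>auto simp: in_keys_iff\<close>)

lemma mpoly_eval_add:
  fixes p q :: "('n::finite, 'a::comm_ring_1) mpoly"
  shows "mpoly_eval (p + q) z = mpoly_eval p z + mpoly_eval q z"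
proof -
  let ?S = "Poly_Mapping.keys p \<union> Poly_Mapping.keys q"
  have "mpoly_eval (p + q) z = (\<Sum>m\<in>?S. Poly_Mapping.lookup (p + q) m * monom_eval m z)"
    by (rule mpoly_eval_superset) (auto dest: subsetD[OF keys_add])
  also have "\<dots> = (\<Sum>m\<in>?S. Poly_Mapping.lookup p m * monom_eval m z)
     + (\<Sum>m\<in>?S. Poly_Mapping.lookup q m * monom_eval m z)"
    by (simp add: lookup_add distrib_right sum.distrib)
  also have "\<dots> = mpoly_eval p z + mpoly_eval q z"
    by (simp add: mpoly_eval_superset[symmetric])
  finally show ?thesis .
qed

lemma mpoly_eval_0: "mpoly_eval 0 z = 0"
  by (simp add: mpoly_eval_def)

lemma mpoly_eval_single:
  "mpoly_eval (Poly_Mapping.single m c) z = c * monom_eval m z"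
  by (simp add: mpoly_eval_def)

lemma mpoly_eval_sum:
  fixes p :: "'i \<Rightarrow> ('n::finite, 'a::comm_ring_1) mpoly"
  shows "mpoly_eval (sum p I) z = (\<Sum>i\<in>I. mpoly_eval (p i) z)"
  by (induction I rule: infinite_finite_induct) (auto simp: mpoly_eval_0 mpoly_eval_add)

lemma mpoly_expand:
  fixes p :: "('n, 'a::comm_ring_1) mpoly"
  shows "p = (\<Sum>m\<in>Poly_Mapping.keys p. Poly_Mapping.single m (Poly_Mapping.lookup p m))"
proof (rule poly_mapping_eqI)
  fix k
  have "Poly_Mapping.lookup (\<Sum>m\<in>Poly_Mapping.keys p. Poly_Mapping.single m (Poly_Mapping.lookup p m)) k
     = (\<Sum>m\<in>Poly_Mapping.keys p. if m = k then Poly_Mapping.lookup p k else 0)"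
    unfolding lookup_sum by (rule sum.cong) (auto simp: lookup_single when_def)
  also have "\<dots> = Poly_Mapping.lookup p k"
    by (auto simp: in_keys_iff)
  finally show "Poly_Mapping.lookup p k = Poly_Mapping.lookup (\<Sum>m\<in>Poly_Mapping.keys p. Poly_Mapping.single m (Poly_Mapping.lookup p m)) k" ..
qed

lemma mpoly_eval_mult:
  fixes p q :: "('n::finite, 'a::comm_ring_1) mpoly"
  shows "mpoly_eval (p * q) z = mpoly_eval p z * mpoly_eval q z"
proof -
  let ?P = "Poly_Mapping.keys p" and ?Q = "Poly_Mapping.keys q"
  have "p * q = (\<Sum>m\<in>?P. Poly_Mapping.single m (Poly_Mapping.lookup p m)) *
       (\<Sum>m\<in>?Q. Poly_Mapping.single m (Poly_Mapping.lookup q m))"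
    using mpoly_expand[of p] mpoly_expand[of q] by simp
  also have "\<dots> = (\<Sum>a\<in>?P. \<Sum>b\<in>?Q. Poly_Mapping.single (a + b) (Poly_Mapping.lookup p a * Poly_Mapping.lookup q b))"
    by (simp add: sum_distrib_left sum_distrib_right mult_single sum.swap[of _ ?Q])
  finally have "mpoly_eval (p * q) z = (\<Sum>a\<in>?P. \<Sum>b\<in>?Q. Poly_Mapping.lookup p a * Poly_Mapping.lookup q b * (monom_eval a z * monom_eval b z))"
    by (simp add: mpoly_eval_sum mpoly_eval_single monom_eval_add)
  also have "\<dots> = mpoly_eval p z * mpoly_eval q z"
    unfolding mpoly_eval_def sum_product by (simp add: ac_simps)
  finally show ?thesis .
qed

lemma mpoly_eval_1: "mpoly_eval (1 :: ('n::finite, 'a::comm_ring_1) mpoly) z = 1"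
  by (simp add: mpoly_eval_def monom_eval_0)

lemma mpoly_eval_diff:
  fixes p q :: "('n::finite, 'a::comm_ring_1) mpoly"
  shows "mpoly_eval (p - q) z = mpoly_eval p z - mpoly_eval q z"
  using mpoly_eval_add[of "p - q" q z] by (simp add: algebra_simps)

lemma mpoly_eval_prod:
  fixes p :: "'i \<Rightarrow> ('n::finite, 'a::comm_ring_1) mpoly"
  shows "mpoly_eval (prod p I) z = (\<Prod>i\<in>I. mpoly_eval (p i) z)"
  by (induction I rule: infinite_finite_induct) (auto simp: mpoly_eval_1 mpoly_eval_mult)

lemma mpoly_eval_power:
  fixes p :: "('n::finite, 'a::comm_ring_1) mpoly"
  shows "mpoly_eval (p ^ n) z = mpoly_eval p z ^ n"
  by (induction n) (auto simp: mpoly_eval_1 mpoly_eval_mult)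


definition shp :: "('n::finite, 'a::comm_ring_1) mpoly \<Rightarrow> ('n \<Rightarrow> int) \<Rightarrow> ('n, 'a) mpoly" where
  "shp p v = (\<Sum>m\<in>Poly_Mapping.keys p. Poly_Mapping.single 0 (Poly_Mapping.lookup p m) *
     (\<Prod>i\<in>UNIV. (Poly_Mapping.single (Poly_Mapping.single i 1) 1 + Poly_Mapping.single 0 (of_int (v i))) ^ Poly_Mapping.lookup m i))"

lemma monom_eval_var: "monom_eval (Poly_Mapping.single i 1) z = of_int (z i)"
  by (simp add: monom_eval_def)

lemma monom_eval_var': "monom_eval (Poly_Mapping.single i (Suc 0)) z = of_int (z i)"
  by (simp add: monom_eval_def)

lemma mpoly_eval_shp:
  "mpoly_eval (shp p v) z = mpoly_eval p (\<lambda>j. z j + v j)"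
proof -
  have "mpoly_eval (shp p v) z = (\<Sum>m\<in>Poly_Mapping.keys p. Poly_Mapping.lookup p m *
     (\<Prod>i\<in>UNIV. (of_int (z i) + of_int (v i)) ^ Poly_Mapping.lookup m i))"
    unfolding shp_def mpoly_eval_sum
    by (simp add: mpoly_eval_mult mpoly_eval_prod mpoly_eval_power mpoly_eval_add
     mpoly_eval_single monom_eval_var monom_eval_var' monom_eval_0 del: single_of_int)
  then show ?thesis by (simp add: mpoly_eval_def[of p] monom_eval_UNIV)
qed

lemma shp_nonzero:
  fixes f :: "('n::finite \<Rightarrow> int) \<Rightarrow> 'a::field" and p :: "('n, 'a) mpoly"
  assumes "\<not> zero_divisor f" "p \<noteq> 0"
  shows "shp p v \<noteq> 0"
proof
  assume "shp p v = 0"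
  then have H: "mpoly_eval p (\<lambda>j. z j + v j) = 0" for z
    using mpoly_eval_shp[of p v z] by (simp add: mpoly_eval_0)
  have "mpoly_eval p w = 0" for w using H[of "\<lambda>j. w j - v j"] by simp
  then show False using assms unfolding zero_divisor_def by auto
qed

lemma compose_ratio:
  fixes f :: "('n::finite \<Rightarrow> int) \<Rightarrow> 'a::field"
  assumes nz: "\<not> zero_divisor f"
    and r1: "is_term_ratio f v A B" and r2: "is_term_ratio f w C D"
  shows "is_term_ratio f (\<lambda>j. v j + w j) (A * shp C v) (B * shp D v)"
  unfolding is_term_ratio_def
proof (intro conjI allI)
  show "A * shp C v \<noteq> 0" "B * shp D v \<noteq> 0"
    using r1 r2 mpoly_nzd[OF _ shp_nonzero[OF nz]] by (auto simp: is_term_ratio_def)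
  fix z
  have e1: "mpoly_eval A z * f z = mpoly_eval B z * f (\<lambda>j. z j + v j)"
    using r1 by (simp add: is_term_ratio_def shift_def)
  have e2: "mpoly_eval C (\<lambda>j. z j + v j) * f (\<lambda>j. z j + v j)
     = mpoly_eval D (\<lambda>j. z j + v j) * f (\<lambda>j. z j + v j + w j)"
    using r2 by (simp add: is_term_ratio_def shift_def)
  have "mpoly_eval (A * shp C v) z * f z
      = mpoly_eval C (\<lambda>j. z j + v j) * (mpoly_eval A z * f z)"
    by (simp add: mpoly_eval_mult mpoly_eval_shp ac_simps)
  also have "\<dots> = mpoly_eval B z * (mpoly_eval C (\<lambda>j. z j + v j) * f (\<lambda>j. z j + v j))"
    using e1 by (simp add: ac_simps)
  also have "\<dots> = mpoly_eval B z * mpoly_eval D (\<lambda>j. z j + v j) * f (\<lambda>j. z j + v j + w j)"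
    using e2 by (simp add: ac_simps)
  also have "\<dots> = mpoly_eval (B * shp D v) z * shift f (\<lambda>j. v j + w j) z"
    by (simp add: mpoly_eval_mult mpoly_eval_shp shift_def add.assoc)
  finally show "mpoly_eval (A * shp C v) z * f z = mpoly_eval (B * shp D v) z * shift f (\<lambda>j. v j + w j) z" .
qed

lemma invert_ratio:
  fixes f :: "('n::finite \<Rightarrow> int) \<Rightarrow> 'a::field"
  assumes nz: "\<not> zero_divisor f"
    and r: "is_term_ratio f v A B"
  shows "is_term_ratio f (\<lambda>j. - v j) (shp B (\<lambda>j. - v j)) (shp A (\<lambda>j. - v j))"
  unfolding is_term_ratio_def
proof (intro conjI allI)
  show "shp B (\<lambda>j. - v j) \<noteq> 0" "shp A (\<lambda>j. - v j) \<noteq> 0"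
    using r shp_nonzero[OF nz] by (auto simp: is_term_ratio_def)
  fix z
  have "mpoly_eval A (\<lambda>j. z j - v j) * f (\<lambda>j. z j - v j) = mpoly_eval B (\<lambda>j. z j - v j) * f (\<lambda>j. z j - v j + v j)"
    using r by (simp add: is_term_ratio_def shift_def)
  then show "mpoly_eval (shp B (\<lambda>j. - v j)) z * f z = mpoly_eval (shp A (\<lambda>j. - v j)) z * shift f (\<lambda>j. - v j) z"
    by (simp add: mpoly_eval_shp shift_def)
qed

lemma zero_ratio: "is_term_ratio f (\<lambda>j. 0) 1 1"
  by (simp add: is_term_ratio_def shift_def)

theorem lemmaB6:
  fixes f :: "('n::finite \<Rightarrow> int) \<Rightarrow> 'a::field"
  assumes "hypergeometric_term f"
    and "\<not> zero_divisor f"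
  shows "\<forall>v. unique_term_ratio f v"
proof
  fix v :: "'n \<Rightarrow> int"
  define good where "good w \<longleftrightarrow> (\<exists>A B. is_term_ratio f w A B)" for w
  have add: "good (\<lambda>j. a j + b j)" if "good a" "good b" for a b
    using that compose_ratio[OF assms(2)] unfolding good_def by blast
  have neg: "good (\<lambda>j. - a j)" if "good a" for a
    using that invert_ratio[OF assms(2)] unfolding good_def by blast
  have unit: "good (unit_vec i)" for i
    using assms(1) unfolding good_def hypergeometric_term_def is_term_ratio_def by blast
  have zero: "good (\<lambda>j. 0)" using zero_ratio unfolding good_def by blast
  have mult: "good (\<lambda>j. n * unit_vec i j)" for n i
  proof (induction n rule: int_induct[where k = 0])
    case base then show ?case using zero by simp
  next
    case (step1 n)
    from add[OF step1(2) unit[of i]] show ?case by (simp add: algebra_simps)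
  next
    case (step2 n)
    from add[OF step2(2) neg[OF unit[of i]]] show ?case by (simp add: algebra_simps)
  qed
  have sumg: "good (\<lambda>j. \<Sum>i\<in>I. v i * unit_vec i j)" for I
  proof (induction I rule: infinite_finite_induct)
    case (infinite A) then show ?case using zero by simp
  next
    case empty then show ?case using zero by simp
  next
    case (insert x F)
    from add[OF mult[of "v x" x] insert(3)] show ?case using insert(1,2) by simp
  qed
  have "(\<lambda>j. \<Sum>i\<in>UNIV. v i * unit_vec i j) = v"
  proof
    fix j
    have "(\<Sum>i\<in>UNIV. v i * unit_vec i j) = (\<Sum>i\<in>UNIV. if j = i then v j else 0)"
      by (rule sum.cong) (auto simp: unit_vec_def)
    then show "(\<Sum>i\<in>UNIV. v i * unit_vec i j) = v j" by simp
  qed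
  then have "good v" using sumg[of UNIV] by simp
  then obtain A B where AB: "is_term_ratio f v A B" unfolding good_def by blast
  have "A * B' = A' * B" if r: "is_term_ratio f v A' B'" for A' B'
  proof -
    have "mpoly_eval (A * B' - A' * B) z * f z = 0" for z
    proof -
      have e1: "mpoly_eval A z * f z = mpoly_eval B z * shift f v z"
        and e2: "mpoly_eval A' z * f z = mpoly_eval B' z * shift f v z"
        using AB r by (auto simp: is_term_ratio_def)
      have "mpoly_eval (A * B' - A' * B) z * f z
         = mpoly_eval B' z * (mpoly_eval A z * f z) - mpoly_eval B z * (mpoly_eval A' z * f z)"
        by (simp add: mpoly_eval_diff mpoly_eval_mult algebra_simps)
      also have "\<dots> = 0" by (simp add: e1 e2)
      finally show ?thesis .
    qed
    then have "A * B' - A' * B = 0"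
      using assms(2) unfolding zero_divisor_def by blast
    then show ?thesis by simp
  qed
  then show "unique_term_ratio f v"
    unfolding unique_term_ratio_def using AB by blast
qed

end
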